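(* Let admission prices $c_1>c_2>\dots>c_N$ be given. Let $i_1<i_2$ be customer classes (so $\beta_{i_1}>\beta_{i_2}$) and $j_1<j_2$ queues (so $c_{j_1}>c_{j_2}$). Then there is no Wardrop equilibrium $P^W$ with both $p^W_{i_1j_2}>0$ and $p^W_{i_2j_1}>0$.
   Context: Model: $M$ customer classes, $N$ queues. Class $i$ arrivals are Poisson of rate $\lambda_i>0$, independent across classes; class $i$ has delay sensitivity $\beta_i>0$ with $\beta_1>\dots>\beta_M$. A routing matrix is a right stochastic $M\times N$ matrix $P=[p_{ij}]$; the arrival rate at queue $j$ is $\gamma_j=\sum_i\lambda_ip_{ij}$. Queue $j$ has a cost function $D_j$ (monotone increasing, continuously differentiable with strictly positive derivative in the interior of its domain) and charges a class-independent admission price $c_j$. A class-$i$ customer joining queue $j$ incurs cost $c_j+\beta_iD_j(\gamma_j)$. $P$ is a Wardrop equilibrium if for all $i,j,k$: $p_{ij}>0$ implies $c_j+\beta_iD_j(\gamma_j)\le c_k+\beta_iD_k(\gamma_k)$. *)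

theory Defs
  imports "HOL-Analysis.Analysis"
begin

text \<open>Classes are indexed 0..<M, queues 0..<N (0-based). A routing matrix is
  a function P :: nat => nat => real, P i j = p_ij.\<close>

definition right_stochastic :: "nat \<Rightarrow> nat \<Rightarrow> (nat \<Rightarrow> nat \<Rightarrow> real) \<Rightarrow> bool" where
  "right_stochastic M N P \<longleftrightarrow>
     (\<forall>i<M. (\<forall>j<N. P i j \<ge> 0) \<and> (\<Sum>j<N. P i j) = 1)"

definition arrival_rate :: "nat \<Rightarrow> (nat \<Rightarrow> real) \<Rightarrow> (nat \<Rightarrow> nat \<Rightarrow> real) \<Rightarrow> nat \<Rightarrow> real" where
  "arrival_rate M lam P j = (\<Sum>i<M. lam i * P i j)"

definition cost_function :: "real set \<Rightarrow> (real \<Rightarrow> real) \<Rightarrow> bool" where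
  "cost_function S f \<longleftrightarrow> is_interval S \<and> mono_on S f \<and>
     (\<exists>f'. continuous_on (interior S) f' \<and>
        (\<forall>x\<in>interior S. (f has_real_derivative f' x) (at x) \<and> f' x > 0))"

definition wardrop_equilibrium ::
  "nat \<Rightarrow> nat \<Rightarrow> (nat \<Rightarrow> real) \<Rightarrow> (nat \<Rightarrow> real) \<Rightarrow> (nat \<Rightarrow> real)
    \<Rightarrow> (nat \<Rightarrow> real \<Rightarrow> real) \<Rightarrow> (nat \<Rightarrow> nat \<Rightarrow> real) \<Rightarrow> bool" where
  "wardrop_equilibrium M N lam beta c D P \<longleftrightarrow> right_stochastic M N P \<and>
     (\<forall>i<M. \<forall>j<N. \<forall>k<N. P i j > 0 \<longrightarrow>
        c j + beta i * D j (arrival_rate M lam P j) \<le> c k + beta i * D k (arrival_rate M lam P k))"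

end

theory Submission
  imports Defs
begin

theorem theorem3:
  fixes M N :: nat and lam beta c :: "nat \<Rightarrow> real"
    and D :: "nat \<Rightarrow> real \<Rightarrow> real" and S :: "nat \<Rightarrow> real set"
    and i1 i2 j1 j2 :: nat
  assumes lam_pos: "\<forall>i<M. lam i > 0"
    and beta_pos: "\<forall>i<M. beta i > 0"
    and beta_dec: "\<forall>i<M. \<forall>i'<M. i < i' \<longrightarrow> beta i > beta i'"
    and cost: "\<forall>j<N. cost_function (S j) (D j)"
    and c_dec: "\<forall>j<N. \<forall>j'<N. j < j' \<longrightarrow> c j > c j'"
    and classes: "i1 < i2" "i2 < M"
    and queues: "j1 < j2" "j2 < N"
  shows "\<not> (\<exists>P. wardrop_equilibrium M N lam beta c D P \<and> P i1 j2 > 0 \<and> P i2 j1 > 0)"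
proof
  assume "\<exists>P. wardrop_equilibrium M N lam beta c D P \<and> P i1 j2 > 0 \<and> P i2 j1 > 0"
  then obtain P where W: "wardrop_equilibrium M N lam beta c D P" and p1: "P i1 j2 > 0" and p2: "P i2 j1 > 0" by blast
  define x1 where "x1 = D j1 (arrival_rate M lam P j1)"
  define x2 where "x2 = D j2 (arrival_rate M lam P j2)"
  have i1M: "i1 < M" "j1 < N" using classes queues by auto
  have e1: "c j2 + beta i1 * x2 \<le> c j1 + beta i1 * x1"
    using W p1 i1M queues unfolding wardrop_equilibrium_def x1_def x2_def by blast
  have e2: "c j1 + beta i2 * x1 \<le> c j2 + beta i2 * x2"
    using W p2 i1M classes queues unfolding wardrop_equilibrium_def x1_def x2_def by blast
  have b: "beta i1 > beta i2" "beta i2 > 0" using beta_dec beta_pos classes i1M by auto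
  have cc: "c j1 > c j2" using c_dec queues i1M by auto
  have "x2 - x1 > 0"
  proof -
    have "c j1 - c j2 \<le> beta i2 * (x2 - x1)" using e2 by (simp add: algebra_simps)
    then have "beta i2 * (x2 - x1) > 0" using cc by linarith
    then show ?thesis using b by (simp add: zero_less_mult_iff)
  qed
  hence "beta i2 * (x2 - x1) < beta i1 * (x2 - x1)" using b by simp
  thus False using e1 e2 by (simp add: algebra_simps)
qed

end
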